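(* Let $G$ be a nontrivial finite cyclic group. Then the order-sum graph $\Gamma_{OS}(G)$ is minimally edge connected if and only if $|G|$ is a prime.
   Context: The order-sum graph $\Gamma_{OS}(G)$ of a finite group $G$ is the simple undirected graph with vertex set $G$ in which two distinct elements $x,y$ are adjacent if and only if $o(x)+o(y)>|G|$, where $o(x)$ is the order of $x$. For a connected graph $\Gamma$, an edge cut-set is a set $S$ of edges such that $\Gamma-S$ is disconnected or has just one vertex, and the edge connectivity $\kappa'(\Gamma)$ is the smallest size of an edge cut-set. $\Gamma$ is minimally edge connected if $\kappa'(\Gamma-\epsilon)=\kappa'(\Gamma)-1$ for every edge $\epsilon$ of $\Gamma$. *)

theory Defs
  imports "HOL-Algebra.Algebra"
begin

definition os_edges :: "('a, 'b) monoid_scheme \<Rightarrow> 'a set set" where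
  "os_edges G = {{x, y} | x y. x \<in> carrier G \<and> y \<in> carrier G \<and> x \<noteq> y \<and>
       group.ord G x + group.ord G y > order G}"

definition graph_connected :: "'a set \<Rightarrow> 'a set set \<Rightarrow> bool" where
  "graph_connected V E \<longleftrightarrow>
     (\<forall>x\<in>V. \<forall>y\<in>V. (x, y) \<in> ({(u, v). u \<in> V \<and> v \<in> V \<and> {u, v} \<in> E})\<^sup>*)"

definition edge_cut_set :: "'a set \<Rightarrow> 'a set set \<Rightarrow> 'a set set \<Rightarrow> bool" where
  "edge_cut_set V E S \<longleftrightarrow> S \<subseteq> E \<and> (\<not> graph_connected V (E - S) \<or> card V = 1)"

definition edge_connectivity :: "'a set \<Rightarrow> 'a set set \<Rightarrow> nat" where
  "edge_connectivity V E = (LEAST k. \<exists>S. edge_cut_set V E S \<and> card S = k)"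

definition minimally_edge_connected :: "'a set \<Rightarrow> 'a set set \<Rightarrow> bool" where
  "minimally_edge_connected V E \<longleftrightarrow>
     (\<forall>e\<in>E. int (edge_connectivity V (E - {e})) = int (edge_connectivity V E) - 1)"

end

theory Submission imports Defs begin

definition split_edges :: "'a set \<Rightarrow> 'a set \<Rightarrow> 'a set set" where
 "split_edges V Gen = {{x,y}|x y. x\<in>V \<and> y\<in>V \<and> x\<noteq>y \<and> (x\<in>Gen \<or> y\<in>Gen)}"

definition crossing :: "'a set \<Rightarrow> 'a set \<Rightarrow> 'a set \<Rightarrow> bool" where
 "crossing V A ee \<longleftrightarrow> (\<exists>u\<in>A. \<exists>v\<in>V-A. ee = {u,v})"

lemma cut_partition:
  assumes "S \<subseteq> E'" "\<not> graph_connected V (E' - S)"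
  obtains A where "A \<subseteq> V" "A \<noteq> {}" "V - A \<noteq> {}"
    "\<And>ee. ee \<in> E' \<Longrightarrow> crossing V A ee \<Longrightarrow> ee \<in> S"
proof -
  let ?R = "{(u, v). u \<in> V \<and> v \<in> V \<and> {u, v} \<in> E' - S}"
  from assms(2) obtain x y where xy: "x \<in> V" "y \<in> V" "(x,y) \<notin> ?R\<^sup>*"
    unfolding graph_connected_def by blast
  define A where "A = {v\<in>V. (x,v) \<in> ?R\<^sup>*}"
  have "A \<subseteq> V" "x \<in> A" "y \<in> V - A" using xy by (auto simp: A_def)
  moreover have "ee \<in> S" if "ee \<in> E'" "crossing V A ee" for ee
  proof (rule ccontr)
    assume "ee \<notin> S"
    from that(2) obtain u v where uv: "u \<in> A" "v \<in> V - A" "ee = {u,v}"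
      unfolding crossing_def by blast
    then have "(u,v) \<in> ?R" using that \<open>ee \<notin> S\<close> \<open>A \<subseteq> V\<close> by auto
    moreover have "(x,u) \<in> ?R\<^sup>*" using uv by (auto simp: A_def)
    ultimately have "(x,v) \<in> ?R\<^sup>*" by (meson rtrancl.rtrancl_into_rtrancl)
    then show False using uv by (auto simp: A_def)
  qed
  ultimately show ?thesis using that by blast
qed

lemma kappa_upper: "edge_cut_set V E' S \<Longrightarrow> edge_connectivity V E' \<le> card S"
  unfolding edge_connectivity_def by (rule Least_le) blast

lemma kappa_lower:
  assumes "finite E'" "card V \<noteq> 1" "\<exists>S. edge_cut_set V E' S"
    and X: "\<And>A. A \<subseteq> V \<Longrightarrow> A \<noteq> {} \<Longrightarrow> V - A \<noteq> {} \<Longrightarrow>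
       \<exists>Y. Y \<subseteq> E' \<and> k \<le> card Y \<and> (\<forall>ee\<in>Y. crossing V A ee)"
  shows "k \<le> edge_connectivity V E'"
proof -
  have "\<exists>S. edge_cut_set V E' S \<and> card S = edge_connectivity V E'"
  proof -
    have "\<exists>k S. edge_cut_set V E' S \<and> card S = k" using assms(3) by blast
    from LeastI_ex[OF this] show ?thesis unfolding edge_connectivity_def .
  qed
  then obtain S where S: "edge_cut_set V E' S" "card S = edge_connectivity V E'" by blast
  then have S1: "S \<subseteq> E'" "\<not> graph_connected V (E' - S)"
    using assms(2) unfolding edge_cut_set_def by auto
  obtain A where A: "A \<subseteq> V" "A \<noteq> {}" "V - A \<noteq> {}"
    "\<And>ee. ee \<in> E' \<Longrightarrow> crossing V A ee \<Longrightarrow> ee \<in> S"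
    using cut_partition[OF S1] by blast
  obtain Y where Y: "Y \<subseteq> E'" "k \<le> card Y" "\<forall>ee\<in>Y. crossing V A ee" using X[OF A(1-3)] by blast
  have "Y \<subseteq> S" using Y A(4) by blast
  moreover have "finite S" using S1(1) assms(1) finite_subset by blast
  ultimately have "card Y \<le> card S" by (rule card_mono[rotated])
  then show ?thesis using Y S by simp
qed

lemma isolate:
  assumes "v\<in>V" "w\<in>V" "v\<noteq>w" "S \<subseteq> E'" "\<And>u. {v,u} \<in> E' \<Longrightarrow> {v,u} \<in> S"
  shows "edge_cut_set V E' S"
proof -
  let ?R = "{(u, v). u \<in> V \<and> v \<in> V \<and> {u, v} \<in> E' - S}"
  have "(v,w) \<notin> ?R\<^sup>*"
  proof
    assume "(v,w) \<in> ?R\<^sup>*"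
    then show False
    proof (cases rule: converse_rtranclE)
      case base then show ?thesis using assms by simp
    next
      case (step u) then show ?thesis using assms(5) by auto
    qed
  qed
  then show ?thesis using assms unfolding edge_cut_set_def graph_connected_def by blast
qed


lemma split_in: "x\<in>V \<Longrightarrow> y\<in>V \<Longrightarrow> x\<noteq>y \<Longrightarrow> x\<in>Gen \<or> y\<in>Gen \<Longrightarrow> {x,y} \<in> split_edges V Gen"
  unfolding split_edges_def by blast

lemma split_nongen: "v\<notin>Gen \<Longrightarrow> {v,u} \<in> split_edges V Gen \<Longrightarrow> u\<in>Gen \<and> u\<noteq>v \<and> u\<in>V \<and> v\<in>V"
  unfolding split_edges_def by (auto simp: doubleton_eq_iff)

lemma split_finite: "finite V \<Longrightarrow> finite (split_edges V Gen)"
proof -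
  assume "finite V"
  have "split_edges V Gen \<subseteq> Pow V" unfolding split_edges_def by auto
  then show ?thesis using \<open>finite V\<close> finite_subset by blast
qed

lemma split_upper:
  assumes "finite V" "Gen \<subseteq> V" "v0 \<in> V" "v0 \<notin> Gen" "w \<in> V" "w \<noteq> v0"
  shows "edge_cut_set V (split_edges V Gen) ((\<lambda>g. {v0,g}) ` Gen)"
    and "edge_connectivity V (split_edges V Gen) \<le> card Gen"
proof -
  let ?S = "(\<lambda>g. {v0,g}) ` Gen"
  show c: "edge_cut_set V (split_edges V Gen) ?S"
  proof (rule isolate[OF assms(3,5) assms(6)[symmetric]])
    show "?S \<subseteq> split_edges V Gen" using assms by (auto intro!: split_in)
    fix u assume "{v0,u} \<in> split_edges V Gen"
    then show "{v0,u} \<in> ?S" using split_nongen[OF assms(4)] by blast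
  qed
  have "inj_on (\<lambda>g. {v0,g}) Gen" using assms(4) by (auto simp: inj_on_def doubleton_eq_iff)
  then have "card ?S = card Gen" by (rule card_image)
  then show "edge_connectivity V (split_edges V Gen) \<le> card Gen" using kappa_upper[OF c] by simp
qed

lemma crossing_main:
  assumes "finite V" "Gen \<subseteq> V" "V - Gen \<noteq> {}" "A \<subseteq> V" "A \<noteq> {}" "V - A \<noteq> {}"
  shows "\<exists>Y. Y \<subseteq> split_edges V Gen \<and> (\<forall>ee\<in>Y. crossing V A ee) \<and> card Gen \<le> card Y \<and>
     ((\<forall>g1\<in>Gen. \<forall>g2\<in>Gen. {g1,g2}\<notin>Y) \<or> card Gen + card (V-Gen) \<le> card Y + 1)"
proof (cases "Gen \<inter> (V - A) = {}")
  case True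
  obtain b where b: "b \<in> V - A" using assms by blast
  then have bG: "b \<notin> Gen" using True by blast
  let ?Y = "(\<lambda>g. {g,b}) ` Gen"
  have "inj_on (\<lambda>g. {g,b}) Gen" using bG by (auto simp: inj_on_def doubleton_eq_iff)
  then have "card ?Y = card Gen" by (rule card_image)
  moreover have "?Y \<subseteq> split_edges V Gen" using assms b bG by (auto intro!: split_in)
  moreover have "\<forall>ee\<in>?Y. crossing V A ee" using True b assms(2) unfolding crossing_def by blast
  moreover have "\<forall>g1\<in>Gen. \<forall>g2\<in>Gen. {g1,g2}\<notin>?Y" using bG by (auto simp: doubleton_eq_iff)
  ultimately show ?thesis by (intro exI[of _ ?Y]) auto
next
  case F1: False
  show ?thesis
  proof (cases "Gen \<inter> A = {}")
    case True
    obtain a where a: "a \<in> A" using assms by blast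
    then have aG: "a \<notin> Gen" using True by blast
    let ?Y = "(\<lambda>g. {a,g}) ` Gen"
    have "inj_on (\<lambda>g. {a,g}) Gen" using aG by (auto simp: inj_on_def doubleton_eq_iff)
    then have "card ?Y = card Gen" by (rule card_image)
    moreover have "?Y \<subseteq> split_edges V Gen" using assms a aG by (auto intro!: split_in)
    moreover have "\<forall>ee\<in>?Y. crossing V A ee" using True a assms(2) unfolding crossing_def by blast
    moreover have "\<forall>g1\<in>Gen. \<forall>g2\<in>Gen. {g1,g2}\<notin>?Y" using aG by (auto simp: doubleton_eq_iff)
    ultimately show ?thesis by (intro exI[of _ ?Y]) auto
  next
    case False
    obtain ga where ga: "ga \<in> Gen" "ga \<in> A" using False by blast
    obtain gb where gb: "gb \<in> Gen" "gb \<in> V - A" using F1 by blast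
    define f where "f = (\<lambda>v. if v \<in> A then {v,gb} else {v,ga})"
    let ?Y = "f ` (V - {gb})"
    have "inj_on f (V - {gb})"
    proof (rule inj_onI)
      fix x y assume xy: "x \<in> V - {gb}" "y \<in> V - {gb}" "f x = f y"
      show "x = y"
      proof (cases "x \<in> A"; cases "y \<in> A")
        assume "x \<in> A" "y \<in> A" then show ?thesis using xy unfolding f_def by (auto simp: doubleton_eq_iff)
      next
        assume "x \<notin> A" "y \<notin> A" then show ?thesis using xy ga unfolding f_def by (auto simp: doubleton_eq_iff)
      next
        assume "x \<in> A" "y \<notin> A" then show ?thesis using xy unfolding f_def by (auto simp: doubleton_eq_iff)
      next
        assume "x \<notin> A" "y \<in> A" then show ?thesis using xy unfolding f_def by (auto simp: doubleton_eq_iff)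
      qed
    qed
    then have c1: "card ?Y = card (V - {gb})" by (rule card_image)
    have c2: "card (V - {gb}) = card V - 1" using gb assms(2) by (simp add: card_Diff_singleton)
    have c3: "card (V - Gen) = card V - card Gen" using assms(1,2) by (meson card_Diff_subset finite_subset)
    have c4: "card Gen \<le> card V" using assms(1,2) by (simp add: card_mono)
    have c5: "card (V - Gen) \<ge> 1" using assms(1,3) by (simp add: Suc_leI card_gt_0_iff)
    have cY: "card ?Y + 1 = card Gen + card (V - Gen)" using c1 c2 c3 c4 c5 by linarith
    then have "card Gen \<le> card ?Y" using c5 by linarith
    moreover have "?Y \<subseteq> split_edges V Gen"
    proof
      fix ee assume "ee \<in> ?Y"
      then obtain v where v: "v \<in> V - {gb}" "ee = f v" by blast
      show "ee \<in> split_edges V Gen"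
      proof (cases "v \<in> A")
        case True then show ?thesis using v gb unfolding f_def by (auto intro!: split_in)
      next
        case False then show ?thesis using v ga assms(4) unfolding f_def by (auto intro!: split_in)
      qed
    qed
    moreover have "\<forall>ee\<in>?Y. crossing V A ee"
    proof
      fix ee assume "ee \<in> ?Y"
      then obtain v where v: "v \<in> V - {gb}" "ee = f v" by blast
      show "crossing V A ee"
      proof (cases "v \<in> A")
        case True then show ?thesis using v gb unfolding f_def crossing_def by auto
      next
        case False
        then have "ee = {ga, v}" using v unfolding f_def by auto
        then show ?thesis using v ga False unfolding crossing_def by blast
      qed
    qed
    ultimately show ?thesis using cY by (intro exI[of _ ?Y]) auto
  qed
qed

theorem mainTheorem5:
  fixes G :: "('a, 'b) monoid_scheme"
  assumes "group G" and "finite (carrier G)" and "cyclic_group G" and "order G > 1"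
  shows "minimally_edge_connected (carrier G) (os_edges G) \<longleftrightarrow> Factorial_Ring.prime (order G)"
proof -
  interpret group G by (rule assms(1))
  let ?V = "carrier G"
  let ?n = "order G"
  define Gen where "Gen = {x\<in>carrier G. ord x = order G}"
  let ?E = "split_edges ?V Gen"
  have fin: "finite ?V" by (rule assms(2))
  have GenV: "Gen \<subseteq> ?V" unfolding Gen_def by blast
  have ordge: "1 \<le> ord x" if "x \<in> ?V" for x using ord_ge_1[OF fin that] .
  have half: "2 * ord x \<le> ?n" if xa: "x \<in> ?V" "x \<notin> Gen" for x
  proof -
    obtain c where c: "?n = ord x * c" using ord_dvd_group_order[OF xa(1)] by (auto elim: dvdE)
    have "c \<noteq> 1" using c xa unfolding Gen_def by auto
    moreover have "c \<noteq> 0" using c assms(4) by (metis mult_0_right not_less_zero)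
    ultimately have "c \<ge> 2" by linarith
    then have "ord x * 2 \<le> ord x * c" by (rule mult_le_mono2)
    then show ?thesis using c by simp
  qed
  have cond: "?n < ord x + ord y \<longleftrightarrow> x \<in> Gen \<or> y \<in> Gen" if "x \<in> ?V" "y \<in> ?V" for x y
  proof
    assume "?n < ord x + ord y"
    then show "x \<in> Gen \<or> y \<in> Gen" using half[OF that(1)] half[OF that(2)] by linarith
  next
    assume "x \<in> Gen \<or> y \<in> Gen"
    then show "?n < ord x + ord y" using ordge[OF that(1)] ordge[OF that(2)] unfolding Gen_def by auto
  qed
  have Eos: "os_edges G = ?E"
    unfolding os_edges_def split_edges_def using cond by blast
  have one_ng: "\<one>\<^bsub>G\<^esub> \<in> ?V - Gen" using assms(4) unfolding Gen_def by auto
  have cardV: "card ?V = ?n" by (simp add: order_def)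
  obtain w where w: "w \<in> ?V" "w \<noteq> \<one>\<^bsub>G\<^esub>"
  proof -
    have "\<not> ?V \<subseteq> {\<one>\<^bsub>G\<^esub>}"
    proof
      assume "?V \<subseteq> {\<one>\<^bsub>G\<^esub>}"
      then have "card ?V \<le> card {\<one>\<^bsub>G\<^esub>}" by (intro card_mono) auto
      then have "card ?V \<le> 1" by simp
      then show False using assms(4) cardV by linarith
    qed
    then show ?thesis using that by blast
  qed
  have Efin: "finite ?E" by (rule split_finite[OF fin])
  have cV1: "card ?V \<noteq> 1" using assms(4) cardV by simp
  have cutE: "edge_cut_set ?V ?E ((\<lambda>g. {\<one>\<^bsub>G\<^esub>,g}) ` Gen)"
    and kE_up: "edge_connectivity ?V ?E \<le> card Gen"
    using split_upper[OF fin GenV _ _ w(1) w(2)] one_ng by auto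
  have kE_low: "card Gen \<le> edge_connectivity ?V ?E"
  proof (rule kappa_lower[OF Efin cV1])
    show "\<exists>S. edge_cut_set ?V ?E S" using cutE by blast
    fix A assume A: "A \<subseteq> ?V" "A \<noteq> {}" "?V - A \<noteq> {}"
    show "\<exists>Y. Y \<subseteq> ?E \<and> card Gen \<le> card Y \<and> (\<forall>ee\<in>Y. crossing ?V A ee)"
      using crossing_main[OF fin GenV _ A] one_ng by blast
  qed
  have kE: "edge_connectivity ?V ?E = card Gen" using kE_up kE_low by simp
  have cardGen: "card Gen + card (?V - Gen) = ?n"
    using fin GenV cardV by (metis card_Diff_subset card_mono finite_subset le_add_diff_inverse)
  show ?thesis
  proof
    assume min: "minimally_edge_connected ?V (os_edges G)"
    show "Factorial_Ring.prime ?n"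
    proof (rule ccontr)
      assume np: "\<not> Factorial_Ring.prime ?n"
      obtain p where p: "p dvd ?n" "p \<noteq> 1" "p \<noteq> ?n"
        using np assms(4) by (auto simp: prime_nat_iff)
      obtain k where k: "?n = p * k" using p(1) by (auto elim: dvdE)
      have "p \<noteq> 0" using k assms(4) by (metis mult_0 not_less_zero)
      then have p2: "p \<ge> 2" using p(2) by linarith
      have "k \<noteq> 0" using k assms(4) by (metis mult_0_right not_less_zero)
      moreover have "k \<noteq> 1" using k p(3) by auto
      ultimately have k2: "k \<ge> 2" by linarith
      have kn: "k < ?n" using k p2 \<open>k \<noteq> 0\<close> n_less_m_mult_n[of k p] by simp
      have pn: "p < ?n" using k k2 \<open>p \<noteq> 0\<close> n_less_n_mult_m[of p k] by simp
      have n4: "?n \<ge> 4" using k mult_le_mono[OF p2 k2] by simp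
      obtain g where g: "g \<in> ?V" "subgroup_generated G {g} = G"
        using assms(3) unfolding cyclic_group_def by blast
      have og: "ord g = ?n" using cyclic_order_is_ord[OF g(1)] g(2) by simp
      have gGen: "g \<in> Gen" using g og unfolding Gen_def by simp
      have igGen: "inv\<^bsub>G\<^esub> g \<in> Gen" using g og unfolding Gen_def by simp
      have gig: "g \<noteq> inv\<^bsub>G\<^esub> g"
      proof
        assume "g = inv\<^bsub>G\<^esub> g"
        then have "g \<otimes>\<^bsub>G\<^esub> g = \<one>\<^bsub>G\<^esub>" using g(1) r_inv by metis
        then have "g [^]\<^bsub>G\<^esub> (2::nat) = \<one>\<^bsub>G\<^esub>" using g(1) by (simp add: numeral_2_eq_2)
        then have "?n dvd 2" using pow_eq_id[OF g(1)] og by simp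
        then show False using n4 using dvd_imp_le[of "order G" 2] by simp
      qed
      define h where "h = g [^]\<^bsub>G\<^esub> k"
      have hV: "h \<in> ?V" unfolding h_def using g(1) by simp
      have "h [^]\<^bsub>G\<^esub> p = g [^]\<^bsub>G\<^esub> (k * p)" unfolding h_def using g(1) by (simp add: nat_pow_pow)
      also have "\<dots> = \<one>\<^bsub>G\<^esub>" using pow_eq_id[OF g(1)] og k by (simp add: mult.commute)
      finally have "ord h dvd p" using pow_eq_id[OF hV] by simp
      then have "ord h \<le> p" using p2 by (simp add: dvd_imp_le)
      then have hG: "h \<notin> Gen" using pn unfolding Gen_def by auto
      have h1: "h \<noteq> \<one>\<^bsub>G\<^esub>"
      proof
        assume "h = \<one>\<^bsub>G\<^esub>"
        then have "?n dvd k" using pow_eq_id[OF g(1)] og unfolding h_def by simp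
        then show False using kn \<open>k \<noteq> 0\<close> by (simp add: nat_dvd_not_less)
      qed
      have "{\<one>\<^bsub>G\<^esub>, h} \<subseteq> ?V - Gen" using one_ng hV hG by blast
      then have "card {\<one>\<^bsub>G\<^esub>, h} \<le> card (?V - Gen)" using fin by (intro card_mono) auto
      then have ng2: "card (?V - Gen) \<ge> 2" using h1 by simp
      define e where "e = {g, inv\<^bsub>G\<^esub> g}"
      have eE: "e \<in> ?E" unfolding e_def using g(1) gig gGen by (intro split_in) auto
      have low: "card Gen \<le> edge_connectivity ?V (?E - {e})"
      proof (rule kappa_lower)
        show "finite (?E - {e})" using Efin by simp
        show "card ?V \<noteq> 1" by (rule cV1)
        have "edge_cut_set ?V (?E - {e}) ((\<lambda>g. {\<one>\<^bsub>G\<^esub>,g}) ` Gen - {e})"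
        proof (rule isolate[of "\<one>\<^bsub>G\<^esub>" _ w])
          show "\<one>\<^bsub>G\<^esub> \<in> ?V" "w \<in> ?V" "\<one>\<^bsub>G\<^esub> \<noteq> w" using w by auto
          show "(\<lambda>g. {\<one>\<^bsub>G\<^esub>,g}) ` Gen - {e} \<subseteq> ?E - {e}" using cutE unfolding edge_cut_set_def by blast
          fix u assume "{\<one>\<^bsub>G\<^esub>,u} \<in> ?E - {e}"
          then show "{\<one>\<^bsub>G\<^esub>,u} \<in> (\<lambda>g. {\<one>\<^bsub>G\<^esub>,g}) ` Gen - {e}" using split_nongen[of "\<one>\<^bsub>G\<^esub>" Gen u ?V] one_ng by blast
        qed
        then show "\<exists>S. edge_cut_set ?V (?E - {e}) S" by blast
        fix A assume A: "A \<subseteq> ?V" "A \<noteq> {}" "?V - A \<noteq> {}"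
        obtain Y where Y: "Y \<subseteq> ?E" "\<forall>ee\<in>Y. crossing ?V A ee" "card Gen \<le> card Y"
          "(\<forall>g1\<in>Gen. \<forall>g2\<in>Gen. {g1,g2}\<notin>Y) \<or> card Gen + card (?V-Gen) \<le> card Y + 1"
          using crossing_main[OF fin GenV _ A] one_ng by blast
        have Yfin: "finite Y" using Y(1) Efin finite_subset by blast
        have "card Gen \<le> card (Y - {e})"
        proof (cases "e \<in> Y")
          case False then show ?thesis using Y(3) by simp
        next
          case True
          then have "card Gen + card (?V-Gen) \<le> card Y + 1" using Y(4) gGen igGen unfolding e_def by blast
          moreover have "card (Y - {e}) = card Y - 1" using True Yfin by simp
          ultimately show ?thesis using ng2 by linarith
        qed
        then show "\<exists>Y'. Y' \<subseteq> ?E - {e} \<and> card Gen \<le> card Y' \<and> (\<forall>ee\<in>Y'. crossing ?V A ee)"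
          using Y by (intro exI[of _ "Y - {e}"]) auto
      qed
      have "int (edge_connectivity ?V (?E - {e})) = int (edge_connectivity ?V ?E) - 1"
        using min eE Eos unfolding minimally_edge_connected_def by auto
      then show False using low kE by linarith
    qed
  next
    assume pr: "Factorial_Ring.prime ?n"
    have GenEq: "Gen = ?V - {\<one>\<^bsub>G\<^esub>}"
    proof
      show "Gen \<subseteq> ?V - {\<one>\<^bsub>G\<^esub>}" using one_ng GenV by blast
      show "?V - {\<one>\<^bsub>G\<^esub>} \<subseteq> Gen"
      proof
        fix x assume x: "x \<in> ?V - {\<one>\<^bsub>G\<^esub>}"
        have "ord x \<noteq> 1" using x ord_eq_1 by blast
        then have "ord x = ?n" using pr ord_dvd_group_order[of x] x by (auto simp: prime_nat_iff)
        then show "x \<in> Gen" using x unfolding Gen_def by simp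
      qed
    qed
    have cG: "card Gen = ?n - 1" using GenEq cardV one_ng by (simp add: card_Diff_singleton)
    have complete: "{x,y} \<in> ?E" if "x \<in> ?V" "y \<in> ?V" "x \<noteq> y" for x y
      using that GenEq by (intro split_in) auto
    show "minimally_edge_connected ?V (os_edges G)"
      unfolding minimally_edge_connected_def Eos
    proof
      fix e assume eE: "e \<in> ?E"
      then obtain x y where xy: "e = {x,y}" "x \<in> ?V" "y \<in> ?V" "x \<noteq> y"
        unfolding split_edges_def by blast
      let ?S = "(\<lambda>v. {x,v}) ` (?V - {x,y})"
      have cutS: "edge_cut_set ?V (?E - {e}) ?S"
      proof (rule isolate[OF xy(2,3,4)])
        show "?S \<subseteq> ?E - {e}" using complete xy by (auto simp: doubleton_eq_iff)
        fix u assume u: "{x,u} \<in> ?E - {e}"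
        then have "u \<noteq> x" "u \<in> ?V" unfolding split_edges_def by (auto simp: doubleton_eq_iff)
        moreover have "u \<noteq> y" using u xy by auto
        ultimately show "{x,u} \<in> ?S" by blast
      qed
      have "inj_on (\<lambda>v. {x,v}) (?V - {x,y})" by (auto simp: inj_on_def doubleton_eq_iff)
      then have "card ?S = card (?V - {x,y})" by (rule card_image)
      also have "\<dots> = ?n - 2" using xy cardV fin by (simp add: card_Diff_subset)
      finally have up: "edge_connectivity ?V (?E - {e}) \<le> ?n - 2" using kappa_upper[OF cutS] by simp
      have low: "card Gen - 1 \<le> edge_connectivity ?V (?E - {e})"
      proof (rule kappa_lower)
        show "finite (?E - {e})" using Efin by simp
        show "card ?V \<noteq> 1" by (rule cV1)
        show "\<exists>S. edge_cut_set ?V (?E - {e}) S" using cutS by blast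
        fix A assume A: "A \<subseteq> ?V" "A \<noteq> {}" "?V - A \<noteq> {}"
        obtain Y where Y: "Y \<subseteq> ?E" "\<forall>ee\<in>Y. crossing ?V A ee" "card Gen \<le> card Y"
          using crossing_main[OF fin GenV _ A] one_ng by blast
        have Yfin: "finite Y" using Y(1) Efin finite_subset by blast
        have "card Y - 1 \<le> card (Y - {e})" using Yfin by (cases "e \<in> Y") auto
        then show "\<exists>Y'. Y' \<subseteq> ?E - {e} \<and> card Gen - 1 \<le> card Y' \<and> (\<forall>ee\<in>Y'. crossing ?V A ee)"
          using Y by (intro exI[of _ "Y - {e}"]) auto
      qed
      show "int (edge_connectivity ?V (?E - {e})) = int (edge_connectivity ?V ?E) - 1"
        using up low kE cG assms(4) by linarith
    qed
  qed
qed

end
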